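(* Let $G$ be a connected graph, $c\in V(G)$, and run the scan procedure at $c$ (with any processing order). If $e=cu_1$ and $f=cu_2$ are edges incident to $c$ with $(e,f)\in\beta_c$, then it is not the case that $e$ and $f$ span a unique square which is chordless and has a unique top vertex.
   Context: All graphs are finite, simple, undirected; $N(x)$ is the open neighborhood of $x$. For distinct edges $e=vu$, $f=vw$ sharing the vertex $v$, a square spanned by $e$ and $f$ is a 4-cycle $vuxw$ with $x\ne v$ adjacent to both $u$ and $w$; $x$ is its top vertex. The square is chordless if it is an induced 4-cycle, i.e. $uw\notin E$ and $vx\notin E$. The edges $e,f$ span a unique square if $|N(u)\cap N(w)|=2$ (exactly one top vertex exists). A top vertex $x$ is unique if $|N(x)\cap N(v)|=2$. Scan procedure at $c$: the vertices of $N(c)$ are called primal, and edges incident to $c$ primal edges. Maintain two sets $I$ (incidence list) and $A$ (absence list) of unordered pairs of primal edges, both initially empty, and for every non-primal vertex $w\ne c$ a record of at most two "recorded primal neighbors" (first and second), initially none. Process the neighbors $u$ of $c$ one by one in an arbitrary order, and for each such $u$ process its neighbors $w\neq c$ in an arbitrary order: (1) if $w\in N(c)$, add $\{cu,cw\}$ to $A$; (2) else, if $w$ has no recorded primal neighbor, record $u$ as its first primal neighbor; (3) else, if $w$ has exactly one recorded primal neighbor $v$, record $u$ as its second primal neighbor, and if $\{cu,cv\}\notin I$ add $\{cu,cv\}$ to $I$, otherwise add $\{cu,cv\}$ to $A$; (4) else ($w$ has recorded first and second primal neighbors $v_1,v_2$) add $\{cv_1,cv_2\},\{cv_1,cu\},\{cv_2,cu\}$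 to $A$ (the record is not changed). After the procedure, $\alpha_c$ is the symmetric relation on primal edges consisting of the pairs in $I$, $\beta_c$ the symmetric relation consisting of the pairs in $A$, and $\overline{\alpha}_c$ the set of pairs of primal edges not in $I$. *)

theory Defs
  imports Main
begin

definition simple_graph :: "'a set \<Rightarrow> ('a \<Rightarrow> 'a \<Rightarrow> bool) \<Rightarrow> bool" where
  "simple_graph V E \<longleftrightarrow> finite V \<and> (\<forall>x y. E x y \<longrightarrow> E y x) \<and> (\<forall>x. \<not> E x x)
     \<and> (\<forall>x y. E x y \<longrightarrow> x \<in> V \<and> y \<in> V)"

definition connected_graph :: "'a set \<Rightarrow> ('a \<Rightarrow> 'a \<Rightarrow> bool) \<Rightarrow> bool" where
  "connected_graph V E \<longleftrightarrow> (\<forall>x\<in>V. \<forall>y\<in>V. E\<^sup>*\<^sup>* x y)"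

definition nbh :: "'a set \<Rightarrow> ('a \<Rightarrow> 'a \<Rightarrow> bool) \<Rightarrow> 'a \<Rightarrow> 'a set" where
  "nbh V E x = {y \<in> V. E x y}"

text \<open>Edges are 2-element sets; a pair of primal edges is a set of two edges.
  State of the scan: (I, A, rec), where rec w is the list of recorded primal neighbours
  (at most two, in recording order).\<close>
type_synonym 'a scan_state = "'a set set set \<times> 'a set set set \<times> ('a \<Rightarrow> 'a list)"

fun scan_step :: "('a \<Rightarrow> 'a \<Rightarrow> bool) \<Rightarrow> 'a \<Rightarrow> 'a scan_state \<Rightarrow> 'a \<times> 'a \<Rightarrow> 'a scan_state" where
  "scan_step E c (I, A, r) (u, w) =
    (if E c w then (I, A \<union> {{{c,u},{c,w}}}, r)
     else (case r w of
        [] \<Rightarrow> (I, A, r(w := [u]))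
      | [v] \<Rightarrow> (if {{c,u},{c,v}} \<notin> I then (I \<union> {{{c,u},{c,v}}}, A, r(w := [v,u]))
               else (I, A \<union> {{{c,u},{c,v}}}, r(w := [v,u])))
      | (v1 # v2 # _) \<Rightarrow> (I, A \<union> {{{c,v1},{c,v2}}, {{c,v1},{c,u}}, {{c,v2},{c,u}}}, r)))"

text \<open>Run the scan at c: us is the processing order of N(c), ws u the processing order
  of the neighbours w \<noteq> c of u.\<close>
definition scan :: "('a \<Rightarrow> 'a \<Rightarrow> bool) \<Rightarrow> 'a \<Rightarrow> 'a list \<Rightarrow> ('a \<Rightarrow> 'a list) \<Rightarrow> 'a scan_state" where
  "scan E c us ws = foldl (scan_step E c) ({}, {}, (\<lambda>_. []))
      (concat (map (\<lambda>u. map (\<lambda>w. (u, w)) (ws u)) us))"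

definition valid_order :: "'a set \<Rightarrow> ('a \<Rightarrow> 'a \<Rightarrow> bool) \<Rightarrow> 'a \<Rightarrow> 'a list \<Rightarrow> ('a \<Rightarrow> 'a list) \<Rightarrow> bool" where
  "valid_order V E c us ws \<longleftrightarrow> distinct us \<and> set us = nbh V E c \<and>
     (\<forall>u\<in>set us. distinct (ws u) \<and> set (ws u) = nbh V E u - {c})"

text \<open>beta_c: the pairs recorded in the absence list A.\<close>
definition beta :: "('a \<Rightarrow> 'a \<Rightarrow> bool) \<Rightarrow> 'a \<Rightarrow> 'a list \<Rightarrow> ('a \<Rightarrow> 'a list) \<Rightarrow> 'a set set set" where
  "beta E c us ws = fst (snd (scan E c us ws))"

definition top_vertex :: "('a \<Rightarrow> 'a \<Rightarrow> bool) \<Rightarrow> 'a \<Rightarrow> 'a \<Rightarrow> 'a \<Rightarrow> 'a \<Rightarrow> bool" where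
  "top_vertex E v u w x \<longleftrightarrow> u \<noteq> w \<and> E v u \<and> E v w \<and> x \<noteq> v \<and> E x u \<and> E x w"

text \<open>vu, vw span a unique square (|N(u) \<inter> N(w)| = 2), it is chordless, and its top vertex
  x is unique (|N(x) \<inter> N(v)| = 2).\<close>
definition unique_chordless_square_unique_top ::
  "'a set \<Rightarrow> ('a \<Rightarrow> 'a \<Rightarrow> bool) \<Rightarrow> 'a \<Rightarrow> 'a \<Rightarrow> 'a \<Rightarrow> bool" where
  "unique_chordless_square_unique_top V E v u w \<longleftrightarrow>
     card (nbh V E u \<inter> nbh V E w) = 2 \<and>
     (\<exists>x. top_vertex E v u w x \<and> \<not> E u w \<and> \<not> E v x \<and>
          card (nbh V E x \<inter> nbh V E v) = 2)"

end

theory Submission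
  imports Defs
begin

definition sinv :: "'a \<Rightarrow> 'a \<Rightarrow> 'a \<Rightarrow> ('a \<times> 'a) set \<Rightarrow> 'a scan_state \<Rightarrow> bool" where
  "sinv c u1 u2 S st \<longleftrightarrow> (case st of (I,A,r) \<Rightarrow>
    (\<forall>w. distinct (r w) \<and> (\<forall>v\<in>set (r w). (v,w)\<in>S)) \<and>
    (\<forall>P\<in>I. \<exists>w v1 v2 rest. r w = v1#v2#rest \<and> P = {{c,v1},{c,v2}}) \<and>
    {{c,u1},{c,u2}} \<notin> A)"

lemma sinvI:
  assumes "\<forall>w. distinct (r w) \<and> (\<forall>v\<in>set (r w). (v,w)\<in>S)"
    "\<forall>P\<in>I. \<exists>w v1 v2 rest. r w = v1#v2#rest \<and> P = {{c,v1},{c,v2}}"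
    "{{c,u1},{c,u2}} \<notin> A"
  shows "sinv c u1 u2 S (I,A,r)"
  using assms unfolding sinv_def by simp

lemma pair_eq:
  assumes "a \<noteq> c" "b \<noteq> c" "u1 \<noteq> c" "u2 \<noteq> c" "{{c,a},{c,b}} = {{c,u1},{c,u2}}"
  shows "(a = u1 \<and> b = u2) \<or> (a = u2 \<and> b = u1)"
  using assms by (auto simp: doubleton_eq_iff)

lemma step_inv:
  assumes inv: "sinv c u1 u2 S (I,A,r)" and new: "(u,w) \<notin> S"
    and Hp: "\<forall>(a,b)\<in>insert (u,w) S. E c a \<and> E a b \<and> b \<noteq> c"
    and sym: "\<forall>a b. E a b \<longrightarrow> E b a" and irr: "\<forall>a. \<not> E a a"
    and sq: "c \<noteq> u1" "c \<noteq> u2" "u1 \<noteq> u2" "\<not> E u1 u2"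
    "\<forall>w. E u1 w \<longrightarrow> E u2 w \<longrightarrow> w \<noteq> c \<longrightarrow> w = x"
    "\<forall>v. E c v \<longrightarrow> E x v \<longrightarrow> v = u1 \<or> v = u2"
  shows "sinv c u1 u2 (insert (u,w) S) (scan_step E c (I,A,r) (u,w))"
proof -
  have R1: "\<forall>w. distinct (r w) \<and> (\<forall>v\<in>set (r w). (v,w)\<in>S)"
    and R2: "\<forall>P\<in>I. \<exists>w v1 v2 rest. r w = v1#v2#rest \<and> P = {{c,v1},{c,v2}}"
    and R3: "{{c,u1},{c,u2}} \<notin> A" using inv unfolding sinv_def by simp_all
  have Euw: "E c u" "E u w" "w \<noteq> c" using Hp by auto
  have rw: "\<And>v w'. v \<in> set (r w') \<Longrightarrow> E c v \<and> E v w' \<and> w' \<noteq> c" using R1 Hp by fastforce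
  have cne: "\<And>a. E c a \<Longrightarrow> a \<noteq> c" using irr by auto
  have common: "\<And>a b w'. E c a \<Longrightarrow> E c b \<Longrightarrow> E a w' \<Longrightarrow> E b w' \<Longrightarrow> w' \<noteq> c \<Longrightarrow>
      {{c,a},{c,b}} = {{c,u1},{c,u2}} \<Longrightarrow> w' = x"
  proof -
    fix a b w' assume "E c a" "E c b" "E a w'" "E b w'" "w' \<noteq> c" "{{c,a},{c,b}} = {{c,u1},{c,u2}}"
    then have "(a = u1 \<and> b = u2) \<or> (a = u2 \<and> b = u1)" using pair_eq cne sq by metis
    then show "w' = x" using sq(5) \<open>E a w'\<close> \<open>E b w'\<close> \<open>w' \<noteq> c\<close> by auto
  qed
  show ?thesis
  proof (cases "E c w")
    case True
    have "{{c,u},{c,w}} \<noteq> {{c,u1},{c,u2}}"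
    proof
      assume "{{c,u},{c,w}} = {{c,u1},{c,u2}}"
      then have "(u = u1 \<and> w = u2) \<or> (u = u2 \<and> w = u1)" using pair_eq cne sq Euw True by metis
      then show False using Euw sq sym by auto
    qed
    moreover have "scan_step E c (I,A,r) (u,w) = (I, A \<union> {{{c,u},{c,w}}}, r)" using True by simp
    moreover have "\<forall>w'. distinct (r w') \<and> (\<forall>v\<in>set (r w'). (v,w')\<in>insert (u,w) S)" using R1 by blast
    ultimately show ?thesis using R2 R3 by (simp add: sinvI)
  next
    case False
    show ?thesis
    proof (cases "r w")
      case Nil
      have "\<forall>P\<in>I. \<exists>w' v1 v2 rest. (r(w := [u])) w' = v1#v2#rest \<and> P = {{c,v1},{c,v2}}"
      proof
        fix P assume "P \<in> I"
        have "\<exists>w' v1 v2 rest. r w' = v1#v2#rest \<and> P = {{c,v1},{c,v2}}" using R2 \<open>P \<in> I\<close> by (rule bspec)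
        then obtain w' v1 v2 rest where "r w' = v1#v2#rest" "P = {{c,v1},{c,v2}}" by blast
        moreover have "w' \<noteq> w" using Nil calculation by auto
        ultimately have "(r(w := [u])) w' = v1#v2#rest \<and> P = {{c,v1},{c,v2}}" by simp
        then show "\<exists>w' v1 v2 rest. (r(w := [u])) w' = v1#v2#rest \<and> P = {{c,v1},{c,v2}}" by blast
      qed
      moreover have "scan_step E c (I,A,r) (u,w) = (I, A, r(w := [u]))" using False Nil by simp
      moreover have "\<forall>w'. distinct ((r(w := [u])) w') \<and> (\<forall>v\<in>set ((r(w := [u])) w'). (v,w')\<in>insert (u,w) S)"
        using R1 Nil by auto
      ultimately show ?thesis using R3 by (simp add: sinvI)
    next
      case (Cons v rest0)
      show ?thesis
      proof (cases rest0)
        case Nil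
        have vw: "(v,w) \<in> S" using R1 Cons by auto
        have uv: "u \<noteq> v" using vw new by auto
        have R1': "\<forall>w'. distinct ((r(w := [v,u])) w') \<and> (\<forall>v'\<in>set ((r(w := [v,u])) w'). (v',w')\<in>insert (u,w) S)"
          using R1 vw uv by auto
        have R2': "\<forall>P\<in>I. \<exists>w' v1 v2 rest. (r(w := [v,u])) w' = v1#v2#rest \<and> P = {{c,v1},{c,v2}}"
        proof
          fix P assume "P \<in> I"
          have "\<exists>w' v1 v2 rest. r w' = v1#v2#rest \<and> P = {{c,v1},{c,v2}}" using R2 \<open>P \<in> I\<close> by (rule bspec)
        then obtain w' v1 v2 rest where "r w' = v1#v2#rest" "P = {{c,v1},{c,v2}}" by blast
          moreover have "w' \<noteq> w" using Nil Cons calculation by auto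
          ultimately have "(r(w := [v,u])) w' = v1#v2#rest \<and> P = {{c,v1},{c,v2}}" by simp
        then show "\<exists>w' v1 v2 rest. (r(w := [v,u])) w' = v1#v2#rest \<and> P = {{c,v1},{c,v2}}" by blast
        qed
        show ?thesis
        proof (cases "{{c,u},{c,v}} \<in> I")
          case False2: False
          have "{{c,u},{c,v}} = {{c,v},{c,u}}" by auto
          then have "\<exists>w' v1 v2 rest. (r(w := [v,u])) w' = v1#v2#rest \<and> {{c,u},{c,v}} = {{c,v1},{c,v2}}"
            by (rule_tac x=w in exI) auto
          moreover have "scan_step E c (I,A,r) (u,w) = (I \<union> {{{c,u},{c,v}}}, A, r(w := [v,u]))"
            using False False2 Nil Cons by simp
          ultimately show ?thesis using R1' R2' R3 by (simp add: sinvI)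
        next
          case True2: True
          have "{{c,u},{c,v}} \<noteq> {{c,u1},{c,u2}}"
          proof
            assume T: "{{c,u},{c,v}} = {{c,u1},{c,u2}}"
            have vin: "v \<in> set (r w)" using \<open>r w = v # rest0\<close> by simp
            have Ev: "E c v" "E v w" using rw[OF vin] by simp_all
            have wx: "w = x" using common[OF Euw(1) Ev(1) Euw(2) Ev(2) Euw(3) T] .
            have "\<exists>w' v1 v2 rest. r w' = v1#v2#rest \<and> {{c,u},{c,v}} = {{c,v1},{c,v2}}"
              using R2 True2 by (rule bspec)
            then obtain w' v1 v2 rest where w': "r w' = v1#v2#rest" "{{c,u},{c,v}} = {{c,v1},{c,v2}}"
              by blast
            have i1: "v1 \<in> set (r w')" and i2: "v2 \<in> set (r w')" using w' by auto
            have E1: "E c v1" "E v1 w'" "w' \<noteq> c" "E c v2" "E v2 w'" using rw[OF i1] rw[OF i2] by simp_all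
            have "w' = x" using common[OF E1(1) E1(4) E1(2) E1(5) E1(3)] w'(2) T by simp
            then show False using wx w' Cons Nil by auto
          qed
          moreover have "scan_step E c (I,A,r) (u,w) = (I, A \<union> {{{c,u},{c,v}}}, r(w := [v,u]))"
            using False True2 Nil Cons by simp
          ultimately show ?thesis using R1' R2' R3 by (simp add: sinvI)
        qed
      next
        case (Cons v2 rest)
        note C1 = \<open>r w = v # rest0\<close>
        have in1: "v \<in> set (r w)" "v2 \<in> set (r w)" using C1 Cons by auto
        have E1: "E c v" "E v w" "E c v2" "E v2 w" using rw[OF in1(1)] rw[OF in1(2)] by simp_all
        have d: "v \<noteq> v2" using R1 C1 Cons by (metis distinct_length_2_or_more)
        have "u \<notin> set (r w)" using R1 new by auto
        then have d2: "u \<noteq> v" "u \<noteq> v2" using in1 by auto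
        have contra: "\<And>a b. a \<in> {v,v2,u} \<Longrightarrow> b \<in> {v,v2,u} \<Longrightarrow> {{c,a},{c,b}} = {{c,u1},{c,u2}} \<Longrightarrow> False"
        proof -
          fix a b assume a: "a \<in> {v,v2,u}" and b: "b \<in> {v,v2,u}" and T: "{{c,a},{c,b}} = {{c,u1},{c,u2}}"
          have "E c a" "E a w" "E c b" "E b w" using a b E1 Euw by auto
          then have wx: "w = x" using common T Euw(3) by blast
          have "v = u1 \<or> v = u2" "v2 = u1 \<or> v2 = u2" "u = u1 \<or> u = u2"
            using sq(6) E1 Euw sym wx by blast+
          then show False using d d2 by auto
        qed
        have "{{c,u1},{c,u2}} \<notin> {{{c,v},{c,v2}}, {{c,v},{c,u}}, {{c,v2},{c,u}}}"
        proof
          assume "{{c,u1},{c,u2}} \<in> {{{c,v},{c,v2}}, {{c,v},{c,u}}, {{c,v2},{c,u}}}"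
          then consider "{{c,u1},{c,u2}} = {{c,v},{c,v2}}" | "{{c,u1},{c,u2}} = {{c,v},{c,u}}"
            | "{{c,u1},{c,u2}} = {{c,v2},{c,u}}" by (simp only: insert_iff empty_iff simp_thms) (elim disjE; simp only:)
          then show False
          proof cases
            case 1 then show False by (rule contra[rotated 2, OF HOL.sym]) simp_all
          next
            case 2 then show False by (rule contra[rotated 2, OF HOL.sym]) simp_all
          next
            case 3 then show False by (rule contra[rotated 2, OF HOL.sym]) simp_all
          qed
        qed
        moreover have "scan_step E c (I,A,r) (u,w) = (I, A \<union> {{{c,v},{c,v2}}, {{c,v},{c,u}}, {{c,v2},{c,u}}}, r)"
          using False C1 Cons by simp
        moreover have "\<forall>w'. distinct (r w') \<and> (\<forall>v\<in>set (r w'). (v,w')\<in>insert (u,w) S)" using R1 by blast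
        ultimately show ?thesis using R2 R3 by (simp add: sinvI)
      qed
    qed
  qed
qed

lemma scan_inv:
  assumes dist: "distinct L"
    and Hp: "\<forall>(a,b)\<in>set L. E c a \<and> E a b \<and> b \<noteq> c"
    and sym: "\<forall>a b. E a b \<longrightarrow> E b a" and irr: "\<forall>a. \<not> E a a"
    and sq: "c \<noteq> u1" "c \<noteq> u2" "u1 \<noteq> u2" "\<not> E u1 u2"
    "\<forall>w. E u1 w \<longrightarrow> E u2 w \<longrightarrow> w \<noteq> c \<longrightarrow> w = x"
    "\<forall>v. E c v \<longrightarrow> E x v \<longrightarrow> v = u1 \<or> v = u2"
  shows "\<forall>zs. ys @ zs = L \<longrightarrow> sinv c u1 u2 (set ys) (foldl (scan_step E c) ({}, {}, (\<lambda>_. [])) ys)"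
proof (induction ys rule: rev_induct)
  case Nil
  show ?case by (auto simp: sinv_def)
next
  case (snoc y ys)
  show ?case
  proof (intro allI impI)
    fix zs assume L: "(ys @ [y]) @ zs = L"
    then have IH: "sinv c u1 u2 (set ys) (foldl (scan_step E c) ({}, {}, (\<lambda>_. [])) ys)"
      using snoc by (metis append.assoc append_Cons append_Nil)
    have ny: "y \<notin> set ys" using dist L by auto
    have sub: "set (ys @ [y]) \<subseteq> set L" using L by auto
    obtain I A r where st: "foldl (scan_step E c) ({}, {}, (\<lambda>_. [])) ys = (I,A,r)" by (metis prod_cases3)
    obtain u w where y: "y = (u,w)" by fastforce
    have "sinv c u1 u2 (insert (u,w) (set ys)) (scan_step E c (I,A,r) (u,w))"
      apply (rule step_inv[OF _ _ _ sym irr sq])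
      using IH st ny y sub Hp by auto
    then show "sinv c u1 u2 (set (ys @ [y])) (foldl (scan_step E c) ({}, {}, (\<lambda>_. [])) (ys @ [y]))"
      using st y by simp
  qed
qed

lemma dist_pairs:
  "distinct us \<Longrightarrow> \<forall>u\<in>set us. distinct (ws u) \<Longrightarrow>
   distinct (concat (map (\<lambda>u. map (\<lambda>w. (u, w)) (ws u)) us))"
  by (induction us) (auto simp: distinct_map inj_on_def)

theorem mainTheorem3:
  fixes V :: "'a set" and E :: "'a \<Rightarrow> 'a \<Rightarrow> bool" and c u1 u2 :: 'a
    and us :: "'a list" and ws :: "'a \<Rightarrow> 'a list"
  assumes "simple_graph V E" and "connected_graph V E" and "c \<in> V"
    and "valid_order V E c us ws"
    and "E c u1" and "E c u2"
    and "{{c,u1},{c,u2}} \<in> beta E c us ws"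
  shows "\<not> unique_chordless_square_unique_top V E c u1 u2"
proof
  assume U: "unique_chordless_square_unique_top V E c u1 u2"
  have G: "finite V" "\<forall>x y. E x y \<longrightarrow> E y x" "\<forall>x. \<not> E x x" "\<forall>x y. E x y \<longrightarrow> x \<in> V \<and> y \<in> V"
    using assms(1) by (auto simp: simple_graph_def)
  obtain x where x: "top_vertex E c u1 u2 x" "\<not> E u1 u2" "\<not> E c x"
    and c1: "card (nbh V E u1 \<inter> nbh V E u2) = 2" and c2: "card (nbh V E x \<inter> nbh V E c) = 2"
    using U by (auto simp: unique_chordless_square_unique_top_def)
  have tv: "u1 \<noteq> u2" "x \<noteq> c" "E x u1" "E x u2" using x(1) by (auto simp: top_vertex_def)
  have s1: "nbh V E u1 \<inter> nbh V E u2 = {c, x}"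
  proof -
    have sub: "{c,x} \<subseteq> nbh V E u1 \<inter> nbh V E u2" using tv G assms(5,6) by (auto simp: nbh_def)
    have "card {c,x} = 2" using tv by auto
    moreover have "finite (nbh V E u1 \<inter> nbh V E u2)" using G by (auto simp: nbh_def)
    ultimately show ?thesis using sub c1 by (metis card_subset_eq)
  qed
  have s2: "nbh V E x \<inter> nbh V E c = {u1, u2}"
  proof -
    have sub: "{u1,u2} \<subseteq> nbh V E x \<inter> nbh V E c" using tv G assms(5,6) by (auto simp: nbh_def)
    have "card {u1,u2} = 2" using tv by auto
    moreover have "finite (nbh V E x \<inter> nbh V E c)" using G by (auto simp: nbh_def)
    ultimately show ?thesis using sub c2 by (metis card_subset_eq)
  qed
  have sq5: "\<forall>w. E u1 w \<longrightarrow> E u2 w \<longrightarrow> w \<noteq> c \<longrightarrow> w = x"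
  proof (intro allI impI)
    fix w assume "E u1 w" "E u2 w" "w \<noteq> c"
    then have "w \<in> nbh V E u1 \<inter> nbh V E u2" using G by (auto simp: nbh_def)
    then show "w = x" using s1 \<open>w \<noteq> c\<close> by auto
  qed
  have sq6: "\<forall>v. E c v \<longrightarrow> E x v \<longrightarrow> v = u1 \<or> v = u2"
  proof (intro allI impI)
    fix v assume "E c v" "E x v"
    then have "v \<in> nbh V E x \<inter> nbh V E c" using G by (auto simp: nbh_def)
    then show "v = u1 \<or> v = u2" using s2 by auto
  qed
  have cu: "c \<noteq> u1" "c \<noteq> u2" using G assms(5,6) by auto
  define L where "L = concat (map (\<lambda>u. map (\<lambda>w. (u, w)) (ws u)) us)"
  have vo: "distinct us" "set us = nbh V E c" "\<forall>u\<in>set us. distinct (ws u) \<and> set (ws u) = nbh V E u - {c}"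
    using assms(4) by (auto simp: valid_order_def)
  have dL: "distinct L" unfolding L_def using dist_pairs vo by blast
  have HL: "\<forall>(a,b)\<in>set L. E c a \<and> E a b \<and> b \<noteq> c"
    using vo unfolding L_def by (auto simp: nbh_def)
  have "sinv c u1 u2 (set L) (foldl (scan_step E c) ({}, {}, (\<lambda>_. [])) L)"
    using scan_inv[OF dL HL G(2) G(3) cu tv(1) x(2) sq5 sq6, of L] by simp
  then have "{{c,u1},{c,u2}} \<notin> beta E c us ws"
    unfolding beta_def scan_def L_def[symmetric] sinv_def by (auto split: prod.splits)
  then show False using assms(7) by simp
qed

end
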